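(* Let $\alpha\in(0,1/2)$ and $q_1,q_3\in(0,1)$ satisfy $\frac{4\alpha+1}{1-q_3}+\frac{3-4\alpha}{1-q_1}<\frac{8(4\alpha+3)}{3}$ together with either (1) $\alpha>1/4$ and $(12\alpha+3)q_3+(3-4\alpha)q_1>8\alpha+3$, or (2) $\alpha\le 1/4$ and $6q_3+2q_1>5$. Then the $q_3$-elasticity of $q_1$, defined as $-\dfrac{(q_1-1/4)/(1/4)}{(q_3-3/4)/(3/4)}$, is greater than $9$.
   Context: Here $1/4$ and $3/4$ are the status quo recommendation qualities of the low and high user segments, and $q_1,q_3$ the treatment's qualities of those segments. *)

theory Defs
  imports Complex_Main
begin

text \<open>The q3-elasticity of q1 relative to the status quo qualities 1/4 (low) and 3/4 (high).\<close>
definition elasticity :: "real \<Rightarrow> real \<Rightarrow> real" where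
  "elasticity q1 q3 = - (((q1 - 1/4) / (1/4)) / ((q3 - 3/4) / (3/4)))"

end

theory Submission
  imports Defs
begin

theorem corollaryA1:
  fixes \<alpha> q1 q3 :: real
  assumes "0 < \<alpha>" and "\<alpha> < 1/2"
    and "0 < q1" and "q1 < 1" and "0 < q3" and "q3 < 1"
    and "(4*\<alpha> + 1) / (1 - q3) + (3 - 4*\<alpha>) / (1 - q1) < 8 * (4*\<alpha> + 3) / 3"
    and "(\<alpha> > 1/4 \<and> (12*\<alpha> + 3) * q3 + (3 - 4*\<alpha>) * q1 > 8*\<alpha> + 3)
         \<or> (\<alpha> \<le> 1/4 \<and> 6*q3 + 2*q1 > 5)"
  shows "elasticity q1 q3 > 9"
proof -
  define u where "u = 1 - q3"
  define v where "v = 1 - q1"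
  define P where "P = \<alpha> * u"
  define Q where "Q = \<alpha> * v"
  define X where "X = (4*\<alpha> + 1) / u"
  define Y where "Y = (3 - 4*\<alpha>) / v"
  have u0: "u > 0" and v0: "v > 0" using assms(3-6) by (auto simp: u_def v_def)
  have A0: "X + Y < 8 * (4*\<alpha> + 3) / 3"
    using assms(7) unfolding X_def Y_def u_def v_def by simp
  have A: "3*X + 3*Y < 24 + 32*\<alpha>" using A0 by (simp add: field_simps)
  have C1: "\<alpha> > 1/4 \<Longrightarrow> (12*\<alpha> + 3) * q3 + (3 - 4*\<alpha>) * q1 > 8*\<alpha> + 3 \<Longrightarrow> 3*v - 4*Q < 3 - 12*P - 3*u"
    unfolding P_def Q_def u_def v_def by (simp add: algebra_simps)
  have C2: "6*q3 + 2*q1 > 5 \<Longrightarrow> 3*u + v < 3/2"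
    unfolding u_def v_def by simp
  have iu: "1/u \<ge> 8 - 16*u"
  proof -
    have "u * (8 - 16*u) \<le> 1" using zero_le_power2[of "4*u-1"] by (simp add: power2_eq_square algebra_simps)
    thus ?thesis using u0 by (simp add: field_simps)
  qed
  have iv: "1/v \<ge> 8/3 - 16*v/9"
  proof -
    have "v * (8/3 - 16*v/9) \<le> 1" using zero_le_power2[of "4*v-3"] by (simp add: power2_eq_square algebra_simps)
    thus ?thesis using v0 by (simp add: field_simps)
  qed
  have e1: "X \<ge> (4*\<alpha>+1) * (8 - 16*u)"
    using mult_left_mono[OF iu, of "4*\<alpha>+1"] assms(1) unfolding X_def by simp
  have e2: "Y \<ge> (3-4*\<alpha>) * (8/3 - 16*v/9)"
    using mult_left_mono[OF iv, of "3-4*\<alpha>"] assms(2) unfolding Y_def by simp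
  have E1: "(4*\<alpha>+1) * (8 - 16*u) = 32*\<alpha> + 8 - 64*P - 16*u"
    unfolding P_def by (simp add: algebra_simps)
  have E2: "(3-4*\<alpha>) * (8/3 - 16*v/9) = 8 - 32*\<alpha>/3 - 16*v/3 + 64*Q/9"
    unfolding Q_def by (simp add: field_simps)
  have ugt: "u > 1/4"
  proof (rule ccontr)
    assume "\<not> u > 1/4"
    hence ul: "u \<le> 1/4" by simp
    have au: "P \<le> \<alpha> / 4" using mult_left_mono[OF ul, of \<alpha>] assms(1) unfolding P_def by simp
    from assms(8) show False
    proof
      assume h: "1/4 < \<alpha> \<and> (12*\<alpha> + 3) * q3 + (3 - 4*\<alpha>) * q1 > 8*\<alpha> + 3"
      have h2: "3*v - 4*Q < 3 - 12*P - 3*u" using C1 h by blast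
      show False using A e1 e2 E1 E2 h2 ul au by linarith
    next
      assume h: "\<alpha> \<le> 1/4 \<and> 6*q3 + 2*q1 > 5"
      have s: "3*u + v < 3/2" using C2 h by blast
      have "(3-4*\<alpha>) * (3*u + v) < (3-4*\<alpha>) * (3/2)" using s assms(2) by (intro mult_strict_left_mono) auto
      hence h2: "9*u+3*v-12*P-4*Q < 9/2-6*\<alpha>" unfolding P_def Q_def by (simp add: algebra_simps)
      show False using A e1 e2 E1 E2 h2 ul au by linarith
    qed
  qed
  have s: "3*u + v < 3/2"
  proof -
    { assume h: "1/4 < \<alpha>" "(12*\<alpha> + 3) * q3 + (3 - 4*\<alpha>) * q1 > 8*\<alpha> + 3"
      have h2: "3*v - 4*Q < 3 - 12*P - 3*u" using C1 h by blast
      have "(24*\<alpha>-6) * u > (24*\<alpha>-6) * (1/4)" using h ugt by (intro mult_strict_left_mono) auto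
      hence "(3-4*\<alpha>)*(3*u+v) < (3-4*\<alpha>)*(3/2)" using h2 unfolding P_def Q_def by (simp add: algebra_simps)
      hence ?thesis by (rule mult_left_less_imp_less) (use assms(2) in auto) }
    thus ?thesis using C2 assms(8) by auto
  qed
  have q3: "q3 - 3/4 < 0" using ugt u_def by simp
  have "elasticity q1 q3 = 3 * (q1 - 1/4) / (3/4 - q3)"
    unfolding elasticity_def using q3 by (simp add: field_simps)
  also have "\<dots> > 9" using q3 s u_def v_def by (simp add: field_simps)
  finally show ?thesis .
qed

end
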